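(* Let $S(p)$ be an oriented polyhedral $2$-surface in $\mathbb{R}^3$ with vertices $p_i$ that is projectively non-degenerate, and let $\pi$ be a proper projection plane for $S(p)$. Let $G_S(\bar p)$ be the projection-framework of $S(p)$ to $\pi$, with projection-coefficients $\beta_i$, and let $\bar\omega_{ij}=\beta_i\beta_j\omega_{ij}$ be the projection-stress coefficients, where $\omega_{ij}$ are the projective lifting coefficients associated to $S$. Then $\bar\omega$ is a self-stress of $G_S(\bar p)$, i.e. for every vertex $\bar p_i$, \[ \sum_{j:\ p_ip_j \text{ an edge of } S}\bar\omega_{ij}\,(\bar p_i-\bar p_j)=0 . \]
   Context: $O$ denotes the origin of $\mathbb{R}^3$; points are identified with vectors; $\det(u,v,w)$ is the determinant of the matrix with columns $u,v,w$; ${\rm span}$ denotes minimal affine span. For points $p_1,\dots,p_4$ with ${\rm span}(p_1,p_2,p_3)$ and ${\rm span}(p_1,p_2,p_4)$ two-dimensional and not containing $O$, set $\omega(p_1,p_2;p_3,p_4)=\det(p_2-p_1,p_3-p_1,p_4-p_1)/(\det(p_1,p_2,p_3)\det(p_1,p_2,p_4))$; this depends only on $p_1,p_2$ and the two planes. An oriented polyhedral surface $S(p)$ is projectively non-degenerate if the affine planes spanned by its (planar polygonal) faces do not contain $O$. An affine plane $\pi$ is a proper projection plane for $S(p)$ if $O\notin\pi$ and for every vertex $p_i$ the line ${\rm span}(O,p_i)$ is not parallel to $\pi$. The projection-framework $G_S(\bar p)$ has vertices $\bar p_i={\rm span}(O,p_i)\cap\pi$ and edges $\bar p_i\bar p_j$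 for the edges $p_ip_j$ of $S$; the projection-coefficient $\beta_i$ is the scalar with $p_i=\beta_i\bar p_i$. For an edge oriented as $\overrightarrow{p_ip_j}$, the orientation of $S$ determines a left face and a right face adjacent to it; choose a point $p_k$ of the right face not on the edge line and a point $p_l$ of the left face not on the edge line, and set $\omega_{ij}=\omega(p_i,p_j;p_k,p_l)$ (this is independent of the choices and of the orientation of the edge, so $\omega_{ij}=\omega_{ji}$); these are the projective lifting coefficients associated to $S$. *)

theory Defs
  imports "HOL-Analysis.Analysis"
begin

type_synonym pt = "real ^ 3"

definition det3 :: "pt \<Rightarrow> pt \<Rightarrow> pt \<Rightarrow> real" where
  "det3 u v w = det (\<chi> r c. (if c = 1 then u else if c = 2 then v else w) $ r :: real^3^3)"

definition omega :: "pt \<Rightarrow> pt \<Rightarrow> pt \<Rightarrow> pt \<Rightarrow> real" where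
  "omega p1 p2 p3 p4 =
     det3 (p2 - p1) (p3 - p1) (p4 - p1) / (det3 p1 p2 p3 * det3 p1 p2 p4)"

text \<open>A face is a list of vertex indices in cyclic order (the orientation).
  Its directed edges are the cyclically consecutive pairs.\<close>
definition cyc_edges :: "nat list \<Rightarrow> (nat \<times> nat) set" where
  "cyc_edges f = set (zip f (rotate1 f))"

definition und_edges :: "nat list \<Rightarrow> nat set set" where
  "und_edges f = {{a, b} | a b. (a, b) \<in> cyc_edges f}"

definition verts :: "nat list set \<Rightarrow> nat set" where
  "verts F = \<Union> (set ` F)"

definition edges :: "nat list set \<Rightarrow> (nat \<times> nat) set" where
  "edges F = (\<Union>f\<in>F. cyc_edges f)"

definition face_ok :: "(nat \<Rightarrow> pt) \<Rightarrow> nat list \<Rightarrow> bool" where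
  "face_ok p f \<longleftrightarrow> distinct f \<and> length f \<ge> 3 \<and> aff_dim (p ` set f) = 2"

definition adj_at :: "nat list set \<Rightarrow> nat \<Rightarrow> nat list \<Rightarrow> nat list \<Rightarrow> bool" where
  "adj_at F v f g \<longleftrightarrow> f \<in> F \<and> g \<in> F \<and> v \<in> set f \<and> v \<in> set g \<and>
      (\<exists>u. {v, u} \<in> und_edges f \<inter> und_edges g)"

text \<open>Oriented closed polyhedral 2-surface with vertex positions p and oriented faces F:
  every directed edge lies in exactly one face, its reverse lies in (exactly) one other face
  (so every edge has exactly two faces, inducing opposite orientations), and the faces around
  each vertex form a single edge-connected star.\<close>
definition oriented_poly_surface :: "(nat \<Rightarrow> pt) \<Rightarrow> nat list set \<Rightarrow> bool" where
  "oriented_poly_surface p F \<longleftrightarrow>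
     finite F \<and> F \<noteq> {} \<and>
     (\<forall>f\<in>F. face_ok p f) \<and>
     inj_on p (verts F) \<and>
     (\<forall>f\<in>F. \<forall>g\<in>F. \<forall>e. e \<in> cyc_edges f \<and> e \<in> cyc_edges g \<longrightarrow> f = g) \<and>
     (\<forall>f\<in>F. \<forall>i j. (i, j) \<in> cyc_edges f \<longrightarrow> (\<exists>g\<in>F. (j, i) \<in> cyc_edges g)) \<and>
     (\<forall>v\<in>verts F. \<forall>f\<in>F. \<forall>g\<in>F. v \<in> set f \<and> v \<in> set g \<longrightarrow> (adj_at F v)\<^sup>*\<^sup>* f g)"

definition proj_nondegenerate :: "(nat \<Rightarrow> pt) \<Rightarrow> nat list set \<Rightarrow> bool" where
  "proj_nondegenerate p F \<longleftrightarrow> (\<forall>f\<in>F. 0 \<notin> affine hull (p ` set f))"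

definition affine_plane :: "pt set \<Rightarrow> bool" where
  "affine_plane P \<longleftrightarrow> affine P \<and> aff_dim P = 2"

definition direction :: "pt set \<Rightarrow> pt set" where
  "direction P = {x - y | x y. x \<in> P \<and> y \<in> P}"

definition proper_projection_plane :: "(nat \<Rightarrow> pt) \<Rightarrow> nat list set \<Rightarrow> pt set \<Rightarrow> bool" where
  "proper_projection_plane p F P \<longleftrightarrow>
     affine_plane P \<and> 0 \<notin> P \<and>
     (\<forall>i\<in>verts F. \<not> (direction (affine hull {0, p i}) \<subseteq> direction P))"

definition proj_pt :: "pt set \<Rightarrow> pt \<Rightarrow> pt" where
  "proj_pt P q = (THE x. x \<in> affine hull {0, q} \<and> x \<in> P)"

definition proj_coeff :: "pt set \<Rightarrow> pt \<Rightarrow> real" where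
  "proj_coeff P q = (THE b. q = b *\<^sub>R proj_pt P q)"

definition left_face :: "nat list set \<Rightarrow> nat \<Rightarrow> nat \<Rightarrow> nat list" where
  "left_face F i j = (THE f. f \<in> F \<and> (i, j) \<in> cyc_edges f)"

definition right_face :: "nat list set \<Rightarrow> nat \<Rightarrow> nat \<Rightarrow> nat list" where
  "right_face F i j = (THE f. f \<in> F \<and> (j, i) \<in> cyc_edges f)"

definition lift_coeff :: "(nat \<Rightarrow> pt) \<Rightarrow> nat list set \<Rightarrow> nat \<Rightarrow> nat \<Rightarrow> real" where
  "lift_coeff p F i j =
     (let k = (SOME k. k \<in> set (right_face F i j) \<and> p k \<notin> affine hull {p i, p j});
          l = (SOME l. l \<in> set (left_face F i j) \<and> p l \<notin> affine hull {p i, p j})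
      in omega (p i) (p j) (p k) (p l))"

end

theory Submission
  imports Defs
begin
unbundle cross3_syntax

lemma det3_cross: "det3 u v w = u \<bullet> (v \<times> w)"
  unfolding det3_def by (simp add: cross3_simps)

lemma vec3_eqI: fixes x y :: "real^3" assumes "x$1 = y$1" "x$2 = y$2" "x$3 = y$3" shows "x = y"
  using assms by (simp add: vec_eq_iff) (metis exhaust_3)

lemma cross_c: "(a \<times> b)$1 = a$2 * b$3 - a$3 * b$2" "(a \<times> b)$2 = a$3 * b$1 - a$1 * b$3" "(a \<times> b)$3 = a$1 * b$2 - a$2 * b$1"
  by (simp_all add: cross3_def vector_def)

lemma inner3: "(a::real^3) \<bullet> b = a$1*b$1 + a$2*b$2 + a$3*b$3"
  by (simp add: inner_vec_def sum_3)

lemma normal_formula: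
  fixes n a b c :: "real^3"
  assumes "n \<bullet> a = 1" "n \<bullet> b = 1" "n \<bullet> c = 1"
  shows "det3 a b c *\<^sub>R n = a \<times> b + b \<times> c + c \<times> a"
proof -
  have "det3 a b c *\<^sub>R n - (a \<times> b + b \<times> c + c \<times> a)
     = (n \<bullet> a - 1) *\<^sub>R (b \<times> c) + (n \<bullet> b - 1) *\<^sub>R (c \<times> a) + (n \<bullet> c - 1) *\<^sub>R (a \<times> b)"
    unfolding det3_cross by (rule vec3_eqI; simp only: cross_c inner3 vector_add_component vector_minus_component vector_scaleR_component real_scaleR_def; algebra)
  then show ?thesis using assms by simp
qed


lemmas V3 = cross_c inner3 vector_add_component vector_minus_component vector_scaleR_component real_scaleR_def vector_uminus_component det3_cross

lemma edge_identity:
  fixes a b k l :: "real^3"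
  shows "det3 a b k *\<^sub>R (a \<times> b + b \<times> l + l \<times> a) - det3 a b l *\<^sub>R (a \<times> b + b \<times> k + k \<times> a)
     = - det3 (b - a) (k - a) (l - a) *\<^sub>R (a \<times> b)"
  by (rule vec3_eqI; simp only: V3; algebra)

lemma det_nonzero:
  fixes n a b c :: "real^3"
  assumes "n \<bullet> a = 1" "n \<bullet> b = 1" "n \<bullet> c = 1" "(b - a) \<times> (c - a) \<noteq> 0"
  shows "det3 a b c \<noteq> 0"
proof
  assume d: "det3 a b c = 0"
  define u where "u = (b - a) \<times> (c - a)"
  have "det3 a b c = a \<bullet> u" unfolding u_def by (simp only: V3; algebra)
  hence au: "a \<bullet> u = 0" using d by simp
  have nb: "n \<bullet> (b - a) = 0" "n \<bullet> (c - a) = 0" using assms by (auto simp: inner_diff_right)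
  have key: "(u \<bullet> u) *\<^sub>R n = (u \<bullet> n) *\<^sub>R u - (n \<bullet> (c - a)) *\<^sub>R ((b - a) \<times> u) + (n \<bullet> (b - a)) *\<^sub>R ((c - a) \<times> u)"
    unfolding u_def by (rule vec3_eqI; simp only: V3; algebra)
  hence "(u \<bullet> u) *\<^sub>R n = (u \<bullet> n) *\<^sub>R u" using nb by simp
  hence "(u \<bullet> u) * (n \<bullet> a) = (u \<bullet> n) * (u \<bullet> a)"
    by (metis inner_commute inner_scaleR_left)
  hence "u \<bullet> u = 0" using au assms by (simp add: inner_commute)
  thus False using assms(4) u_def by simp
qed

lemma edge_normal:
  fixes a b k l nR nL :: "real^3"
  assumes "nR \<bullet> a = 1" "nR \<bullet> b = 1" "nR \<bullet> k = 1" "nL \<bullet> a = 1" "nL \<bullet> b = 1" "nL \<bullet> l = 1"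
    and dk: "det3 a b k \<noteq> 0" and dl: "det3 a b l \<noteq> 0"
  shows "omega a b k l *\<^sub>R (a \<times> b) = nR - nL"
proof -
  have R: "det3 a b k *\<^sub>R nR = a \<times> b + b \<times> k + k \<times> a" using normal_formula assms(1-3) .
  have L: "det3 a b l *\<^sub>R nL = a \<times> b + b \<times> l + l \<times> a" using normal_formula assms(4-6) .
  have "det3 a b k *\<^sub>R (det3 a b l *\<^sub>R nL) - det3 a b l *\<^sub>R (det3 a b k *\<^sub>R nR)
     = - det3 (b - a) (k - a) (l - a) *\<^sub>R (a \<times> b)"
    unfolding R L by (rule edge_identity)
  hence e: "(det3 a b k * det3 a b l) *\<^sub>R (nR - nL) = det3 (b - a) (k - a) (l - a) *\<^sub>R (a \<times> b)"
    by (simp add: algebra_simps)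
  have "omega a b k l *\<^sub>R (a \<times> b) = (1 / (det3 a b k * det3 a b l)) *\<^sub>R (det3 (b - a) (k - a) (l - a) *\<^sub>R (a \<times> b))"
    unfolding omega_def by simp
  also have "\<dots> = nR - nL" unfolding e[symmetric] using dk dl by simp
  finally show ?thesis .
qed

lemma d3: "DIM(real^3) = 3" by (simp add: DIM_cart)
lemma face_normal_exists:
  fixes S :: "(real^3) set"
  assumes "aff_dim S = 2" "0 \<notin> affine hull S"
  shows "\<exists>n. \<forall>x\<in>affine hull S. n \<bullet> x = 1"
proof -
  have "\<exists>a b. a \<noteq> 0 \<and> affine hull S = {x. a \<bullet> x = b}"
    by (rule iffD1[OF aff_dim_eq_hyperplane[of S]]) (simp add: d3 assms(1))
  then obtain a b where ab: "a \<noteq> 0" "affine hull S = {x. a \<bullet> x = b}" by blast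
  have "b \<noteq> 0"
  proof
    assume "b = 0" hence "0 \<in> affine hull S" unfolding ab(2) by simp
    thus False using assms(2) by simp
  qed
  hence "\<forall>x\<in>affine hull S. (a /\<^sub>R b) \<bullet> x = 1" unfolding ab(2) by simp
  thus ?thesis by blast
qed
lemma not_on_line_cross:
  fixes a b c :: "real^3"
  assumes "a \<noteq> b" "c \<notin> affine hull {a, b}"
  shows "(b - a) \<times> (c - a) \<noteq> 0"
proof
  assume "(b - a) \<times> (c - a) = 0"
  hence "collinear {0, b - a, c - a}" by (simp add: cross_eq_0)
  moreover have "b - a \<noteq> 0" using assms by simp
  moreover have "c - a \<noteq> 0" using assms(2) by (auto intro: hull_inc)
  ultimately obtain t where t: "c - a = t *\<^sub>R (b - a)" by (auto simp: collinear_lemma)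
  have "c = (1 - t) *\<^sub>R a + t *\<^sub>R b" using t by (simp add: algebra_simps)
  hence "c \<in> affine hull {a, b}" unfolding affine_hull_2 by force
  thus False using assms(2) by simp
qed

lemma exists_off_line:
  fixes S :: "(real^3) set"
  assumes "aff_dim S = 2"
  shows "\<exists>x\<in>S. x \<notin> affine hull {a, b}"
proof (rule ccontr)
  assume "\<not> ?thesis"
  hence "S \<subseteq> affine hull {a, b}" by auto
  hence "aff_dim S \<le> aff_dim (affine hull {a, b})" by (rule aff_dim_subset)
  hence "aff_dim S \<le> 1" by (simp split: if_splits)
  thus False using assms by simp
qed


lemma plane_eq:
  fixes P :: "(real^3) set"
  assumes "affine_plane P" "0 \<notin> P"
  shows "\<exists>m. m \<noteq> 0 \<and> P = {x. m \<bullet> x = 1}"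
proof -
  have "\<exists>a b. a \<noteq> 0 \<and> affine hull P = {x. a \<bullet> x = b}"
    by (rule iffD1[OF aff_dim_eq_hyperplane[of P]]) (use assms in \<open>simp add: d3 affine_plane_def\<close>)
  then obtain a b where ab: "a \<noteq> 0" "affine hull P = {x. a \<bullet> x = b}" by blast
  have P: "P = {x. a \<bullet> x = b}" using assms(1) ab(2) affine_hull_eq unfolding affine_plane_def by metis
  have b: "b \<noteq> 0"
  proof
    assume "b = 0" hence "0 \<in> P" unfolding P by simp
    thus False using assms(2) by simp
  qed
  hence "P = {x. (a /\<^sub>R b) \<bullet> x = 1}" unfolding P by (auto simp: field_simps)
  moreover have "a /\<^sub>R b \<noteq> 0" using ab(1) b by simp
  ultimately show ?thesis by blast
qed
lemma proj_facts:
  fixes P :: "(real^3) set" and q m :: "real^3"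
  assumes m0: "m \<noteq> 0" and P: "P = {x. m \<bullet> x = 1}" and nd: "\<not> (direction (affine hull {0, q}) \<subseteq> direction P)"
  shows "m \<bullet> q \<noteq> 0" "proj_pt P q = (1 / (m \<bullet> q)) *\<^sub>R q" "proj_coeff P q = m \<bullet> q"
proof -
  show mq: "m \<bullet> q \<noteq> 0"
  proof
    assume mq0: "m \<bullet> q = 0"
    define x0 where "x0 = (1 / (m \<bullet> m)) *\<^sub>R m"
    have x0: "m \<bullet> x0 = 1" using m0 unfolding x0_def by simp
    have "direction (affine hull {0, q}) \<subseteq> direction P"
    proof
      fix d assume "d \<in> direction (affine hull {0, q})"
      then obtain u v u' v' where d: "d = (u *\<^sub>R 0 + v *\<^sub>R q) - (u' *\<^sub>R 0 + v' *\<^sub>R q)"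
        unfolding direction_def affine_hull_2 by blast
      hence md: "m \<bullet> d = 0" using mq0 by (simp add: inner_diff_right)
      have "d = (x0 + d) - x0" by simp
      moreover have "x0 + d \<in> P" "x0 \<in> P" using P x0 md by (auto simp: inner_add_right)
      ultimately show "d \<in> direction P" unfolding direction_def by blast
    qed
    thus False using nd by simp
  qed
  have pp: "proj_pt P q = (1 / (m \<bullet> q)) *\<^sub>R q"
    unfolding proj_pt_def
  proof (rule the_equality)
    show "(1 / (m \<bullet> q)) *\<^sub>R q \<in> affine hull {0, q} \<and> (1 / (m \<bullet> q)) *\<^sub>R q \<in> P"
    proof
      have "(1 / (m \<bullet> q)) *\<^sub>R q = (1 - 1 / (m \<bullet> q)) *\<^sub>R 0 + (1 / (m \<bullet> q)) *\<^sub>R q" by simp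
      thus "(1 / (m \<bullet> q)) *\<^sub>R q \<in> affine hull {0, q}" unfolding affine_hull_2 by fastforce
      show "(1 / (m \<bullet> q)) *\<^sub>R q \<in> P" using mq P by simp
    qed
  next
    fix x assume "x \<in> affine hull {0, q} \<and> x \<in> P"
    then obtain u v where x: "x = u *\<^sub>R 0 + v *\<^sub>R q" and "m \<bullet> x = 1"
      using P unfolding affine_hull_2 by blast
    hence "v * (m \<bullet> q) = 1" by simp
    hence "v = 1 / (m \<bullet> q)" using mq by (simp add: field_simps)
    thus "x = (1 / (m \<bullet> q)) *\<^sub>R q" using x by simp
  qed
  thus "proj_pt P q = (1 / (m \<bullet> q)) *\<^sub>R q" .
  have q0: "q \<noteq> 0" using mq by auto
  show "proj_coeff P q = m \<bullet> q"
    unfolding proj_coeff_def pp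
  proof (rule the_equality)
    show "q = (m \<bullet> q) *\<^sub>R (1 / (m \<bullet> q)) *\<^sub>R q" using mq by simp
  next
    fix b assume "q = b *\<^sub>R (1 / (m \<bullet> q)) *\<^sub>R q"
    hence "(1 - b / (m \<bullet> q)) *\<^sub>R q = 0" by (simp add: algebra_simps)
    hence "1 - b / (m \<bullet> q) = 0" using q0 by simp
    thus "b = m \<bullet> q" using mq by (simp add: field_simps)
  qed
qed



lemma cyc_edges_iff:
  "(a, b) \<in> cyc_edges f \<longleftrightarrow> (\<exists>n<length f. a = f ! n \<and> b = f ! (Suc n mod length f))"
  unfolding cyc_edges_def set_zip by (auto simp: nth_rotate1)

lemma suc_mod: assumes "n < (L::nat)" shows "Suc n mod L = (if Suc n = L then 0 else Suc n)"
proof (cases "Suc n < L")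
  case False
  hence "Suc n = L" using assms by linarith
  thus ?thesis by simp
qed simp

lemma cyc_mem: "(a, b) \<in> cyc_edges f \<Longrightarrow> a \<in> set f \<and> b \<in> set f"
  unfolding cyc_edges_iff by (auto simp: suc_mod) (metis length_greater_0_conv nth_mem zero_less_Suc)

lemma cyc_out_unique:
  assumes "distinct f" "(a, b) \<in> cyc_edges f" "(a, b') \<in> cyc_edges f"
  shows "b = b'"
proof -
  obtain n where n: "n < length f" "a = f ! n" "b = f ! (Suc n mod length f)"
    using assms(2) unfolding cyc_edges_iff by blast
  obtain n' where n': "n' < length f" "a = f ! n'" "b' = f ! (Suc n' mod length f)"
    using assms(3) unfolding cyc_edges_iff by blast
  have "n = n'" using n n' assms(1) nth_eq_iff_index_eq by metis
  thus ?thesis using n n' by simp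
qed

lemma cyc_in_unique:
  assumes "distinct f" "(a, b) \<in> cyc_edges f" "(a', b) \<in> cyc_edges f"
  shows "a = a'"
proof -
  obtain n where n: "n < length f" "a = f ! n" "b = f ! (Suc n mod length f)"
    using assms(2) unfolding cyc_edges_iff by blast
  obtain n' where n': "n' < length f" "a' = f ! n'" "b = f ! (Suc n' mod length f)"
    using assms(3) unfolding cyc_edges_iff by blast
  have l1: "Suc n mod length f < length f" and l2: "Suc n' mod length f < length f"
    using n(1) n'(1) by (auto simp: suc_mod)
  have "Suc n mod length f = Suc n' mod length f"
    using n(3) n'(3) assms(1) l1 l2 nth_eq_iff_index_eq by metis
  hence "n = n'" using n(1) n'(1) by (simp add: suc_mod split: if_splits)
  thus ?thesis using n n' by simp
qed

lemma cyc_out_exists: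
  assumes "a \<in> set f" shows "\<exists>b. (a, b) \<in> cyc_edges f"
proof -
  obtain n where "n < length f" "a = f ! n" using assms by (auto simp: in_set_conv_nth)
  thus ?thesis unfolding cyc_edges_iff by blast
qed

lemma cyc_in_exists:
  assumes "a \<in> set f" shows "\<exists>b. (b, a) \<in> cyc_edges f"
proof -
  obtain n where n: "n < length f" "a = f ! n" using assms by (auto simp: in_set_conv_nth)
  define L where "L = length f"
  have L: "L > 0" using n L_def by linarith
  define m where "m = (n + L - 1) mod L"
  have "m < L" using L m_def by simp
  moreover have "Suc m mod L = n"
  proof -
    have "Suc m mod L = (n + L) mod L" unfolding m_def using L by (simp add: mod_Suc_eq)
    also have "\<dots> = n" using n L_def by simp
    finally show ?thesis .
  qed
  ultimately have "\<exists>m<length f. f ! m = f ! m \<and> a = f ! (Suc m mod length f)" using n L_def by auto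
  thus ?thesis unfolding cyc_edges_iff by blast
qed

lemma cyc_neq:
  assumes "distinct f" "length f \<ge> 3" "(a, b) \<in> cyc_edges f" shows "a \<noteq> b"
proof -
  obtain n where n: "n < length f" "a = f ! n" "b = f ! (Suc n mod length f)"
    using assms(3) unfolding cyc_edges_iff by blast
  have ne: "Suc n mod length f \<noteq> n" and lt: "Suc n mod length f < length f"
    using n(1) assms(2) by (auto simp: suc_mod)
  show ?thesis using n assms(1) ne lt by (simp add: nth_eq_iff_index_eq)
qed


lemma term_id:
  fixes m a b :: "real^3"
  assumes "m \<bullet> a \<noteq> 0" "m \<bullet> b \<noteq> 0"
  shows "((m \<bullet> a) * (m \<bullet> b) * w) *\<^sub>R ((1 / (m \<bullet> a)) *\<^sub>R a - (1 / (m \<bullet> b)) *\<^sub>R b) = m \<times> (w *\<^sub>R (a \<times> b))"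
proof -
  have "((m \<bullet> a) * (m \<bullet> b) * w) *\<^sub>R ((1 / (m \<bullet> a)) *\<^sub>R a - (1 / (m \<bullet> b)) *\<^sub>R b)
      = w *\<^sub>R ((m \<bullet> b) *\<^sub>R a - (m \<bullet> a) *\<^sub>R b)"
    using assms by (simp add: scaleR_diff_right mult.commute mult.left_commute)
  also have "\<dots> = m \<times> (w *\<^sub>R (a \<times> b))"
    by (rule vec3_eqI; simp only: V3; algebra)
  finally show ?thesis .
qed

lemma cross_sum: "m \<times> sum g S = (\<Sum>j\<in>S. m \<times> g j)"
  by (induction S rule: infinite_finite_induct) (simp_all add: cross_add_right)


theorem theorem2p8:
  fixes p :: "nat \<Rightarrow> real ^ 3" and F :: "nat list set" and P :: "(real ^ 3) set"
  assumes "oriented_poly_surface p F"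
    and "proj_nondegenerate p F"
    and "proper_projection_plane p F P"
  shows "\<forall>i\<in>verts F.
    (\<Sum>j\<in>{j. (i, j) \<in> edges F}.
       (proj_coeff P (p i) * proj_coeff P (p j) * lift_coeff p F i j) *\<^sub>R
         (proj_pt P (p i) - proj_pt P (p j))) = 0"
proof
  fix i assume iV: "i \<in> verts F"
  note S = assms(1)[unfolded oriented_poly_surface_def]
  have finF: "finite F" using conjunct1[OF S] .
  note S2 = conjunct2[OF conjunct2[OF S]]
  have fok: "\<And>f. f \<in> F \<Longrightarrow> face_ok p f" using conjunct1[OF S2] by blast
  note S3 = conjunct2[OF S2]
  have inj: "inj_on p (verts F)" using conjunct1[OF S3] .
  note S4 = conjunct2[OF S3]
  have uniq: "\<And>f g e. f \<in> F \<Longrightarrow> g \<in> F \<Longrightarrow> e \<in> cyc_edges f \<Longrightarrow> e \<in> cyc_edges g \<Longrightarrow> f = g"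
    using conjunct1[OF S4] by blast
  have rev: "\<And>f a b. f \<in> F \<Longrightarrow> (a, b) \<in> cyc_edges f \<Longrightarrow> \<exists>g\<in>F. (b, a) \<in> cyc_edges g"
    using conjunct1[OF conjunct2[OF S4]] by blast
  have dist: "\<And>f. f \<in> F \<Longrightarrow> distinct f" and len: "\<And>f. f \<in> F \<Longrightarrow> length f \<ge> 3"
    and ad: "\<And>f. f \<in> F \<Longrightarrow> aff_dim (p ` set f) = 2"
    using fok unfolding face_ok_def by blast+
  have nd0: "\<And>f. f \<in> F \<Longrightarrow> 0 \<notin> affine hull (p ` set f)"
    using assms(2) unfolding proj_nondegenerate_def by blast
  have vertsI: "\<And>f v. f \<in> F \<Longrightarrow> v \<in> set f \<Longrightarrow> v \<in> verts F"
    unfolding verts_def by blast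
  define nf where "nf f = (SOME n. \<forall>x\<in>affine hull (p ` set f). n \<bullet> x = 1)" for f
  have nf: "nf f \<bullet> p v = 1" if "f \<in> F" "v \<in> set f" for f v
  proof -
    have "\<forall>x\<in>affine hull (p ` set f). nf f \<bullet> x = 1"
      unfolding nf_def by (rule someI_ex, rule face_normal_exists[OF ad nd0]) (use that in auto)
    moreover have "p v \<in> affine hull (p ` set f)" using that by (intro hull_inc) auto
    ultimately show ?thesis by blast
  qed
  obtain m where m0: "m \<noteq> 0" and Pm: "P = {x. m \<bullet> x = 1}"
    using plane_eq assms(3) unfolding proper_projection_plane_def by blast
  have pf: "m \<bullet> p v \<noteq> 0 \<and> proj_pt P (p v) = (1 / (m \<bullet> p v)) *\<^sub>R p v \<and> proj_coeff P (p v) = m \<bullet> p v"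
    if "v \<in> verts F" for v
    using proj_facts[OF m0 Pm] assms(3) that unfolding proper_projection_plane_def by blast
  define Nb where "Nb = {j. (i, j) \<in> edges F}"
  define Fi where "Fi = {f\<in>F. i \<in> set f}"
  have finE: "finite (edges F)" unfolding edges_def cyc_edges_def using finF by auto
  have "Nb \<subseteq> snd ` edges F" unfolding Nb_def by force
  hence finNb: "finite Nb" using finE finite_surj by blast
  have LF: "left_face F a b = f" if "f \<in> F" "(a, b) \<in> cyc_edges f" for a b f
    unfolding left_face_def using that uniq by blast
  have RF: "right_face F a b = f" if "f \<in> F" "(b, a) \<in> cyc_edges f" for a b f
    unfolding right_face_def using that uniq by blast
  have Lf: "left_face F i j \<in> F \<and> (i, j) \<in> cyc_edges (left_face F i j)" if jN0: "j \<in> Nb" for j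
  proof -
    obtain f where "f \<in> F" "(i, j) \<in> cyc_edges f" using jN0 unfolding Nb_def edges_def by blast
    thus ?thesis using LF by simp
  qed
  have Rf: "right_face F i j \<in> F \<and> (j, i) \<in> cyc_edges (right_face F i j)" if jN0: "j \<in> Nb" for j
  proof -
    obtain f where "f \<in> F" "(i, j) \<in> cyc_edges f" using jN0 unfolding Nb_def edges_def by blast
    then obtain g where "g \<in> F" "(j, i) \<in> cyc_edges g" using rev by blast
    thus ?thesis using RF by simp
  qed
  have edge: "lift_coeff p F i j *\<^sub>R (p i \<times> p j) = nf (right_face F i j) - nf (left_face F i j)"
    if jN: "j \<in> Nb" for j
  proof -
    define R where "R = right_face F i j"
    define L where "L = left_face F i j"
    have R: "R \<in> F" "(j, i) \<in> cyc_edges R" using Rf[OF jN] R_def by auto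
    have L: "L \<in> F" "(i, j) \<in> cyc_edges L" using Lf[OF jN] L_def by auto
    have ijR: "i \<in> set R" "j \<in> set R" using cyc_mem[OF R(2)] by auto
    have ijL: "i \<in> set L" "j \<in> set L" using cyc_mem[OF L(2)] by auto
    have "i \<noteq> j" using cyc_neq[OF dist[OF L(1)] len[OF L(1)] L(2)] .
    hence pij: "p i \<noteq> p j" using inj vertsI[OF L(1) ijL(1)] vertsI[OF L(1) ijL(2)]
      unfolding inj_on_def by blast
    define k where "k = (SOME k. k \<in> set R \<and> p k \<notin> affine hull {p i, p j})"
    define l where "l = (SOME l. l \<in> set L \<and> p l \<notin> affine hull {p i, p j})"
    have "\<exists>k. k \<in> set R \<and> p k \<notin> affine hull {p i, p j}"
      using exists_off_line[OF ad[OF R(1)], of "p i" "p j"] by auto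
    hence k: "k \<in> set R" "p k \<notin> affine hull {p i, p j}" unfolding k_def by (metis (mono_tags, lifting) someI_ex)+
    have "\<exists>l. l \<in> set L \<and> p l \<notin> affine hull {p i, p j}"
      using exists_off_line[OF ad[OF L(1)], of "p i" "p j"] by auto
    hence l: "l \<in> set L" "p l \<notin> affine hull {p i, p j}" unfolding l_def by (metis (mono_tags, lifting) someI_ex)+
    have dk: "det3 (p i) (p j) (p k) \<noteq> 0"
      by (rule det_nonzero[of "nf R"]) (use nf R(1) ijR k not_on_line_cross[OF pij k(2)] in auto)
    have dl: "det3 (p i) (p j) (p l) \<noteq> 0"
      by (rule det_nonzero[of "nf L"]) (use nf L(1) ijL l not_on_line_cross[OF pij l(2)] in auto)
    have "lift_coeff p F i j = omega (p i) (p j) (p k) (p l)"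
      unfolding lift_coeff_def k_def l_def R_def L_def Let_def ..
    also have "\<dots> *\<^sub>R (p i \<times> p j) = nf R - nf L"
      by (rule edge_normal) (use nf R(1) L(1) ijR ijL k l dk dl in auto)
    finally show ?thesis unfolding R_def L_def .
  qed
  have bijL: "bij_betw (\<lambda>j. left_face F i j) Nb Fi"
  proof (rule bij_betw_imageI)
    show "inj_on (\<lambda>j. left_face F i j) Nb"
    proof (rule inj_onI)
      fix j j' assume "j \<in> Nb" "j' \<in> Nb" "left_face F i j = left_face F i j'"
      thus "j = j'" using Lf cyc_out_unique dist by metis
    qed
    show "(\<lambda>j. left_face F i j) ` Nb = Fi"
    proof
      show "(\<lambda>j. left_face F i j) ` Nb \<subseteq> Fi" unfolding Fi_def using Lf cyc_mem by blast
      show "Fi \<subseteq> (\<lambda>j. left_face F i j) ` Nb"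
      proof
        fix f assume "f \<in> Fi"
        hence f: "f \<in> F" "i \<in> set f" unfolding Fi_def by auto
        then obtain j where j: "(i, j) \<in> cyc_edges f" using cyc_out_exists by blast
        hence "j \<in> Nb" unfolding Nb_def edges_def using f by blast
        moreover have "left_face F i j = f" using LF f j by blast
        ultimately show "f \<in> (\<lambda>j. left_face F i j) ` Nb" by force
      qed
    qed
  qed
  have bijR: "bij_betw (\<lambda>j. right_face F i j) Nb Fi"
  proof (rule bij_betw_imageI)
    show "inj_on (\<lambda>j. right_face F i j) Nb"
    proof (rule inj_onI)
      fix j j' assume "j \<in> Nb" "j' \<in> Nb" "right_face F i j = right_face F i j'"
      thus "j = j'" using Rf cyc_in_unique dist by metis
    qed
    show "(\<lambda>j. right_face F i j) ` Nb = Fi"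
    proof
      show "(\<lambda>j. right_face F i j) ` Nb \<subseteq> Fi" unfolding Fi_def using Rf cyc_mem by blast
      show "Fi \<subseteq> (\<lambda>j. right_face F i j) ` Nb"
      proof
        fix f assume "f \<in> Fi"
        hence f: "f \<in> F" "i \<in> set f" unfolding Fi_def by auto
        then obtain j where j: "(j, i) \<in> cyc_edges f" using cyc_in_exists by blast
        then obtain g where "g \<in> F" "(i, j) \<in> cyc_edges g" using rev f by blast
        hence "j \<in> Nb" unfolding Nb_def edges_def by blast
        moreover have "right_face F i j = f" using RF f j by blast
        ultimately show "f \<in> (\<lambda>j. right_face F i j) ` Nb" by force
      qed
    qed
  qed
  have sum0: "(\<Sum>j\<in>Nb. lift_coeff p F i j *\<^sub>R (p i \<times> p j)) = 0"
  proof -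
    have "(\<Sum>j\<in>Nb. lift_coeff p F i j *\<^sub>R (p i \<times> p j))
        = (\<Sum>j\<in>Nb. nf (right_face F i j)) - (\<Sum>j\<in>Nb. nf (left_face F i j))"
      using edge by (simp add: sum_subtractf)
    also have "\<dots> = sum nf Fi - sum nf Fi"
      using sum.reindex_bij_betw[OF bijR, of nf] sum.reindex_bij_betw[OF bijL, of nf] by simp
    finally show ?thesis by simp
  qed
  have "(\<Sum>j\<in>Nb. (proj_coeff P (p i) * proj_coeff P (p j) * lift_coeff p F i j) *\<^sub>R
         (proj_pt P (p i) - proj_pt P (p j)))
      = (\<Sum>j\<in>Nb. m \<times> (lift_coeff p F i j *\<^sub>R (p i \<times> p j)))"
  proof (rule sum.cong)
    fix j assume jN: "j \<in> Nb"
    then obtain f where "f \<in> F" "(i, j) \<in> cyc_edges f" unfolding Nb_def edges_def by blast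
    hence jV: "j \<in> verts F" using cyc_mem vertsI by blast
    show "(proj_coeff P (p i) * proj_coeff P (p j) * lift_coeff p F i j) *\<^sub>R
         (proj_pt P (p i) - proj_pt P (p j)) = m \<times> (lift_coeff p F i j *\<^sub>R (p i \<times> p j))"
      using pf[OF iV] pf[OF jV] term_id by simp
  qed simp
  also have "\<dots> = m \<times> (\<Sum>j\<in>Nb. lift_coeff p F i j *\<^sub>R (p i \<times> p j))" by (rule cross_sum[symmetric])
  also have "\<dots> = 0" using sum0 by simp
  finally show "(\<Sum>j\<in>{j. (i, j) \<in> edges F}.
       (proj_coeff P (p i) * proj_coeff P (p j) * lift_coeff p F i j) *\<^sub>R
         (proj_pt P (p i) - proj_pt P (p j))) = 0" unfolding Nb_def .
qed

end
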